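(* Let $M>0$ and $0\le\alpha<1$, and let $r_0=r_0(\alpha)$ be the real root in $(0,1)$ of the equation \[(1-\alpha)(1+M)(1-r)^3=M\big(1-\alpha+(1+\alpha)r\big).\] Let $\mathcal{F}$ be the class of analytic functions $f(z)=z+\sum_{n\ge2}a_nz^n$ on $\mathbb{D}$ with $|a_n|\le M$ for all $n\ge2$. Then every $f\in\mathcal{F}$ satisfies $\left|\frac{zf''(z)}{f'(z)}\right|\le1-\alpha$ for $|z|\le r_0$; $r_0(\alpha)$ is the radius of convexity of order $\alpha$ of $\mathcal{F}$; and $r_0(1/2)$ is the radius of uniform convexity of $\mathcal{F}$. All results are sharp (in particular $r_0$ in the first statement cannot be replaced by any larger number).
   Context: $\mathbb{D}=\{z\in\mathbb{C}:|z|<1\}$. For a class $\mathcal{F}$ of analytic functions on $\mathbb{D}$ normalized by $f(0)=0$, $f'(0)=1$, and $0\le\alpha<1$, the radius of convexity of order $\alpha$ of $\mathcal{F}$ is the supremum of $r\in(0,1]$ such that every $f\in\mathcal{F}$ satisfies $f'(z)\ne0$ and $\operatorname{Re}\big(1+zf''(z)/f'(z)\big)>\alpha$ for $|z|<r$. The radius of uniform convexity of $\mathcal{F}$ is the supremum of $r\in(0,1]$ such that every $f\in\mathcal{F}$ satisfies $f'(z)\ne0$ and $\operatorname{Re}\big(1+zf''(z)/f'(z)\big)>\left|zf''(z)/f'(z)\right|$ for $|z|<r$. *)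

theory Defs
  imports "HOL-Analysis.Analysis"
begin

definition bounded_coeff_class :: "real \<Rightarrow> (complex \<Rightarrow> complex) set" where
  "bounded_coeff_class M = {f. \<exists>a :: nat \<Rightarrow> complex.
      a 0 = 0 \<and> a 1 = 1 \<and> (\<forall>n\<ge>2. norm (a n) \<le> M) \<and>
      (\<forall>z\<in>ball 0 1. f z = (\<Sum>n. a n * z ^ n))}"

definition radius_convexity_order :: "(complex \<Rightarrow> complex) set \<Rightarrow> real \<Rightarrow> real" where
  "radius_convexity_order F \<alpha> = Sup {r \<in> {0<..1}. \<forall>f\<in>F. \<forall>z. norm z < r \<longrightarrow>
      deriv f z \<noteq> 0 \<and> Re (1 + z * deriv (deriv f) z / deriv f z) > \<alpha>}"

definition radius_uniform_convexity :: "(complex \<Rightarrow> complex) set \<Rightarrow> real" where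
  "radius_uniform_convexity F = Sup {r \<in> {0<..1}. \<forall>f\<in>F. \<forall>z. norm z < r \<longrightarrow>
      deriv f z \<noteq> 0 \<and>
      Re (1 + z * deriv (deriv f) z / deriv f z) > norm (z * deriv (deriv f) z / deriv f z)}"

end

theory Submission imports Defs begin

lemma sums1: "0 \<le> (x::real) \<Longrightarrow> x < 1 \<Longrightarrow> (\<lambda>n. of_nat (Suc n) * x ^ n) sums (1 / (1 - x)^2)"
  by (rule geometric_deriv_sums) simp

lemma sums2:
  fixes x :: real assumes "\<bar>x\<bar> < 1"
  shows "(\<lambda>n. of_nat (Suc n) * of_nat (Suc (Suc n)) * x ^ n) sums (2 / (1 - x)^3)"
proof -
  have "(\<lambda>n. diffs (\<lambda>n. of_nat (Suc n)) n * x ^ n) sums (2 / (1 - x)^3)"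
  proof (rule termdiffs_sums_strong[where K=1])
    fix z :: real assume "norm z < 1"
    thus "(\<lambda>n. of_nat (Suc n) * z ^ n) sums (1 / (1 - z)^2)" by (rule geometric_deriv_sums)
  next
    show "((\<lambda>z. 1 / (1 - z)^2) has_field_derivative 2 / (1 - x)^3) (at x)"
    proof -
      have nz: "1 - x \<noteq> 0" using assms by auto
      have nz2: "(1 - x)^2 \<noteq> 0" using nz by simp
      show ?thesis
        apply (rule derivative_eq_intros refl)+
        using nz2 apply simp
        using nz by (simp add: divide_simps) algebra
    qed
  qed (use assms in auto)
  thus ?thesis unfolding diffs_def by (simp add: mult.commute)
qed

lemma summ_coeff:
  fixes a :: "nat \<Rightarrow> complex"
  assumes "\<forall>n\<ge>2. norm (a n) \<le> M" "norm z < 1"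
  shows "summable (\<lambda>n. a n * z ^ n)"
proof -
  define B where "B = \<bar>M\<bar> + norm (a 0) + norm (a 1)"
  have b: "norm (a n) \<le> B" for n
  proof (cases "n < 2")
    case True then have "n = 0 \<or> n = 1" by auto
    then show ?thesis unfolding B_def by auto
  next
    case False then have "norm (a n) \<le> M" using assms(1) by simp
    moreover have "norm (a 0) \<ge> 0" "norm (a 1) \<ge> 0" by simp_all
    ultimately show ?thesis unfolding B_def by linarith
  qed
  have "norm (a n * z ^ n) \<le> B * norm z ^ n" for n
    using b[of n] by (simp add: norm_mult norm_power mult_right_mono)
  moreover have "summable (\<lambda>n. B * norm z ^ n)"
    using assms(2) by (intro summable_mult summable_geometric) simp
  ultimately show ?thesis using summable_comparison_test'[where N=0 and f="\<lambda>n. a n * z ^ n" and g="\<lambda>n. B * norm z ^ n"] by blast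
qed

lemma derivs_class:
  fixes a :: "nat \<Rightarrow> complex"
  assumes a: "\<forall>n\<ge>2. norm (a n) \<le> M" and f: "\<forall>z\<in>ball 0 1. f z = (\<Sum>n. a n * z ^ n)"
    and z: "norm z < 1"
  shows "deriv f z = (\<Sum>n. diffs a n * z ^ n)"
    "deriv (deriv f) z = (\<Sum>n. diffs (diffs a) n * z ^ n)"
proof -
  have sm: "\<And>w. norm w < 1 \<Longrightarrow> summable (\<lambda>n. a n * w ^ n)" using summ_coeff a by blast
  have sm1: "\<And>w. norm w < 1 \<Longrightarrow> summable (\<lambda>n. diffs a n * w ^ n)"
    by (rule termdiff_converges[where K=1]) (use sm in auto)
  have d1: "(f has_field_derivative (\<Sum>n. diffs a n * w ^ n)) (at w)" if "norm w < 1" for w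
  proof (rule has_field_derivative_transform_within_open[where S="ball 0 1"])
    show "((\<lambda>z. \<Sum>n. a n * z ^ n) has_field_derivative (\<Sum>n. diffs a n * w ^ n)) (at w)"
      by (rule termdiffs_strong'[where K=1]) (use sm that in auto)
  qed (use f that in auto)
  have e1: "deriv f w = (\<Sum>n. diffs a n * w ^ n)" if "norm w < 1" for w
    using d1[OF that] by (rule DERIV_imp_deriv)
  then show "deriv f z = (\<Sum>n. diffs a n * z ^ n)" using z .
  have "(deriv f has_field_derivative (\<Sum>n. diffs (diffs a) n * z ^ n)) (at z)"
  proof (rule has_field_derivative_transform_within_open[where S="ball 0 1"])
    show "((\<lambda>z. \<Sum>n. diffs a n * z ^ n) has_field_derivative (\<Sum>n. diffs (diffs a) n * z ^ n)) (at z)"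
      by (rule termdiffs_strong'[where K=1]) (use sm1 z in auto)
  qed (use e1 z in auto)
  then show "deriv (deriv f) z = (\<Sum>n. diffs (diffs a) n * z ^ n)" by (rule DERIV_imp_deriv)
qed

lemma norm_sums_le:
  fixes f :: "nat \<Rightarrow> complex"
  assumes "\<And>n. norm (f n) \<le> g n" "g sums s" "f sums t"
  shows "norm t \<le> s"
proof -
  have sg: "summable g" using assms(2) by (rule sums_summable)
  have sn: "summable (\<lambda>n. norm (f n))"
    using summable_comparison_test'[where N=0 and f="\<lambda>n. norm (f n)" and g=g] assms(1) sg by simp
  have "norm t = norm (suminf f)" using assms(3) by (simp add: sums_iff)
  also have "\<dots> \<le> (\<Sum>n. norm (f n))" by (rule summable_norm[OF sn])
  also have "\<dots> \<le> suminf g" by (rule suminf_le[OF assms(1) sn sg])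
  also have "\<dots> = s" using assms(2) by (simp add: sums_iff)
  finally show ?thesis .
qed

lemma bounds_class:
  fixes a :: "nat \<Rightarrow> complex"
  assumes a: "\<forall>n\<ge>2. norm (a n) \<le> M" and a1: "a 1 = 1" and z: "norm z < 1"
  shows "norm ((\<Sum>n. diffs a n * z ^ n) - 1) \<le> M * (1 / (1 - norm z)^2 - 1)"
    "norm (\<Sum>n. diffs (diffs a) n * z ^ n) \<le> M * (2 / (1 - norm z)^3)"
proof -
  define \<rho> where "\<rho> = norm z"
  have \<rho>: "0 \<le> \<rho>" "\<rho> < 1" using z unfolding \<rho>_def by auto
  have sm: "\<And>w. norm w < 1 \<Longrightarrow> summable (\<lambda>n. a n * w ^ n)" using summ_coeff a by blast
  have sm1: "\<And>w. norm w < 1 \<Longrightarrow> summable (\<lambda>n. diffs a n * w ^ n)"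
    by (rule termdiff_converges[where K=1]) (use sm in auto)
  have sm2: "summable (\<lambda>n. diffs (diffs a) n * z ^ n)"
    by (rule termdiff_converges[where K=1]) (use sm1 z in auto)
  define T where "T n = diffs a n * z ^ n" for n
  have T0: "T 0 = 1" unfolding T_def diffs_def using a1 by simp
  have "T sums suminf T" using sm1[OF z] unfolding T_def by (simp add: summable_sums)
  then have Ts: "(\<lambda>n. T (Suc n)) sums (suminf T - 1)"
    using sums_Suc_iff[of T "suminf T - 1"] T0 by simp
  define g where "g n = of_nat (Suc n) * \<rho> ^ n" for n
  have "g sums (1 / (1 - \<rho>)^2)" unfolding g_def using sums1 \<rho> by blast
  then have "(\<lambda>n. g (Suc n)) sums (1 / (1 - \<rho>)^2 - 1)"
    using sums_Suc_iff[of g "1 / (1 - \<rho>)^2 - 1"] by (simp add: g_def)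
  then have Rs: "(\<lambda>n. M * g (Suc n)) sums (M * (1 / (1 - \<rho>)^2 - 1))" by (rule sums_mult)
  have "norm (T (Suc n)) \<le> M * g (Suc n)" for n
  proof -
    have "norm (T (Suc n)) = of_nat (Suc (Suc n)) * norm (a (Suc (Suc n))) * \<rho> ^ Suc n"
      unfolding T_def diffs_def \<rho>_def by (simp add: norm_mult norm_power del: of_nat_Suc)
    also have "\<dots> \<le> of_nat (Suc (Suc n)) * M * \<rho> ^ Suc n"
      using a \<rho> by (intro mult_right_mono mult_left_mono) auto
    finally show ?thesis unfolding g_def by (simp add: algebra_simps)
  qed
  from norm_sums_le[OF this Rs Ts]
  show "norm ((\<Sum>n. diffs a n * z ^ n) - 1) \<le> M * (1 / (1 - norm z)^2 - 1)"
    unfolding T_def \<rho>_def .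
  define h where "h n = of_nat (Suc n) * of_nat (Suc (Suc n)) * \<rho> ^ n" for n
  have "h sums (2 / (1 - \<rho>)^3)" unfolding h_def using sums2 \<rho> by simp
  then have Hs: "(\<lambda>n. M * h n) sums (M * (2 / (1 - \<rho>)^3))" by (rule sums_mult)
  have "norm (diffs (diffs a) n * z ^ n) \<le> M * h n" for n
  proof -
    have "norm (diffs (diffs a) n * z ^ n) = of_nat (Suc n) * of_nat (Suc (Suc n)) * norm (a (Suc (Suc n))) * \<rho> ^ n"
      unfolding diffs_def \<rho>_def by (simp add: norm_mult norm_power del: of_nat_Suc)
    also have "\<dots> \<le> of_nat (Suc n) * of_nat (Suc (Suc n)) * M * \<rho> ^ n"
      using a \<rho> by (intro mult_right_mono mult_left_mono) auto
    finally show ?thesis unfolding h_def by (simp add: algebra_simps)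
  qed
  from norm_sums_le[OF this Hs summable_sums[OF sm2]]
  show "norm (\<Sum>n. diffs (diffs a) n * z ^ n) \<le> M * (2 / (1 - norm z)^3)"
    unfolding \<rho>_def .
qed

definition ecoef :: "real \<Rightarrow> nat \<Rightarrow> complex" where
  "ecoef M n = (if n = 0 then 0 else if n = 1 then 1 else - complex_of_real M)"

lemma ecoef_class: "M \<ge> 0 \<Longrightarrow> (\<lambda>z. \<Sum>n. ecoef M n * z ^ n) \<in> bounded_coeff_class M"
  unfolding bounded_coeff_class_def
  by (rule CollectI, rule exI[of _ "ecoef M"]) (auto simp: ecoef_def)

lemma ecoef_vals:
  assumes s: "0 \<le> s" "s < 1"
  shows "(\<Sum>n. diffs (ecoef M) n * of_real s ^ n) = of_real (1 - M * (1 / (1 - s)^2 - 1))"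
    "(\<Sum>n. diffs (diffs (ecoef M)) n * of_real s ^ n) = of_real (- (M * (2 / (1 - s)^3)))"
proof -
  define T where "T n = diffs (ecoef M) n * of_real s ^ n" for n
  have T0: "T 0 = 1" unfolding T_def diffs_def ecoef_def by simp
  define g where "g n = of_nat (Suc n) * s ^ n" for n
  have "g sums (1 / (1 - s)^2)" unfolding g_def using sums1 s by blast
  then have "(\<lambda>n. g (Suc n)) sums (1 / (1 - s)^2 - 1)"
    using sums_Suc_iff[of g "1 / (1 - s)^2 - 1"] by (simp add: g_def)
  then have "(\<lambda>n. - (M * g (Suc n))) sums (- (M * (1 / (1 - s)^2 - 1)))" by (intro sums_minus sums_mult)
  then have "(\<lambda>n. complex_of_real (- (M * g (Suc n)))) sums complex_of_real (- (M * (1 / (1 - s)^2 - 1)))"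
    by (subst sums_of_real_iff)
  moreover have "T (Suc n) = complex_of_real (- (M * g (Suc n)))" for n
    unfolding T_def diffs_def ecoef_def g_def by simp
  ultimately have "(\<lambda>n. T (Suc n)) sums complex_of_real (- (M * (1 / (1 - s)^2 - 1)))" by simp
  then have "T sums (complex_of_real (- (M * (1 / (1 - s)^2 - 1))) + 1)"
    using sums_Suc_iff[of T] T0 by simp
  then show "(\<Sum>n. diffs (ecoef M) n * of_real s ^ n) = of_real (1 - M * (1 / (1 - s)^2 - 1))"
    unfolding T_def by (simp add: sums_iff)
  define h where "h n = of_nat (Suc n) * of_nat (Suc (Suc n)) * s ^ n" for n
  have "h sums (2 / (1 - s)^3)" unfolding h_def using sums2 s by simp
  then have "(\<lambda>n. - (M * h n)) sums (- (M * (2 / (1 - s)^3)))" by (intro sums_minus sums_mult)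
  then have "(\<lambda>n. complex_of_real (- (M * h n))) sums complex_of_real (- (M * (2 / (1 - s)^3)))"
    by (subst sums_of_real_iff)
  moreover have "diffs (diffs (ecoef M)) n * of_real s ^ n = complex_of_real (- (M * h n))" for n
    unfolding diffs_def ecoef_def h_def by simp
  ultimately show "(\<Sum>n. diffs (diffs (ecoef M)) n * of_real s ^ n) = of_real (- (M * (2 / (1 - s)^3)))"
    by (simp add: sums_iff)
qed

definition phi :: "real \<Rightarrow> real \<Rightarrow> real \<Rightarrow> real" where
  "phi M \<alpha> r = (1 - \<alpha>) * (1 + M) * (1 - r) ^ 3 - M * (1 - \<alpha> + (1 + \<alpha>) * r)"

lemma alg_key:
  assumes "r < 1"
  shows "(1 - \<alpha>) * (1 - M * (1 / (1 - r)^2 - 1)) - r * (M * (2 / (1 - r)^3)) = phi M \<alpha> r / (1 - r)^3"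
proof -
  define u where "u = 1 - r"
  have nz: "u \<noteq> 0" using assms unfolding u_def by simp
  have r: "r = 1 - u" unfolding u_def by simp
  have 1: "(1 - \<alpha>) * (1 - M * (1 / u^2 - 1)) * u^3 = (1 - \<alpha>) * (u^3 - M * u + M * u^3)"
    using nz by (simp add: field_simps power2_eq_square power3_eq_cube)
  have 2: "r * (M * (2 / u^3)) * u^3 = 2 * M * r"
    using nz by simp
  have "((1 - \<alpha>) * (1 - M * (1 / u^2 - 1)) - r * (M * (2 / u^3))) * u^3 = phi M \<alpha> r"
    unfolding phi_def left_diff_distrib 1 2 u_def[symmetric] unfolding r
    by (simp add: algebra_simps power2_eq_square power3_eq_cube)
  then show ?thesis unfolding u_def[symmetric] using nz by (simp add: eq_divide_eq)
qed

lemma alg_pos: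
  assumes "M > 0" "0 \<le> \<alpha>" "\<alpha> < 1" "0 \<le> r" "r < 1" "phi M \<alpha> r \<ge> 0"
  shows "1 - M * (1 / (1 - r)^2 - 1) > 0"
proof -
  define X where "X = (1 + M) * (1 - r)^2 - M"
  have e: "phi M \<alpha> r = (1 - \<alpha>) * (1 - r) * X - 2 * M * r"
    unfolding phi_def X_def by (simp add: algebra_simps power2_eq_square power3_eq_cube)
  have "X > 0"
  proof (cases "r = 0")
    case True then show ?thesis unfolding X_def by simp
  next
    case False
    then have "2 * M * r > 0" using assms by simp
    then have "(1 - \<alpha>) * (1 - r) * X > 0" using e assms(6) by linarith
    moreover have "(1 - \<alpha>) * (1 - r) > 0" using assms by simp
    ultimately show ?thesis by (simp add: zero_less_mult_iff)
  qed
  moreover have "1 - M * (1 / (1 - r)^2 - 1) = X / (1 - r)^2"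
    unfolding X_def using assms(5) by (simp add: field_simps)
  ultimately show ?thesis using assms(5) by simp
qed

lemma phi_mono:
  assumes "M > 0" "0 \<le> \<alpha>" "\<alpha> < 1" "r < r'" "r' \<le> 1"
  shows "phi M \<alpha> r' < phi M \<alpha> r"
proof -
  have "(1 - r') ^ 3 < (1 - r) ^ 3" using assms by (intro power_strict_mono) auto
  then have "(1 - \<alpha>) * (1 + M) * (1 - r') ^ 3 < (1 - \<alpha>) * (1 + M) * (1 - r) ^ 3"
    using assms by (intro mult_strict_left_mono) auto
  moreover have "M * (1 - \<alpha> + (1 + \<alpha>) * r) \<le> M * (1 - \<alpha> + (1 + \<alpha>) * r')"
    using assms by (intro mult_left_mono) auto
  ultimately show ?thesis unfolding phi_def by linarith
qed

lemma main_bound: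
  assumes M: "M > 0" and al: "0 \<le> \<alpha>" "\<alpha> < 1" and f: "f \<in> bounded_coeff_class M"
    and z: "norm z < 1" and ph: "phi M \<alpha> (norm z) \<ge> 0"
  shows "deriv f z \<noteq> 0"
    "norm (z * deriv (deriv f) z / deriv f z) \<le> 1 - \<alpha>"
    "phi M \<alpha> (norm z) > 0 \<Longrightarrow> norm (z * deriv (deriv f) z / deriv f z) < 1 - \<alpha>"
proof -
  obtain a :: "nat \<Rightarrow> complex" where a: "a 0 = 0" "a 1 = 1" "\<forall>n\<ge>2. norm (a n) \<le> M"
    "\<forall>z\<in>ball 0 1. f z = (\<Sum>n. a n * z ^ n)"
    using f unfolding bounded_coeff_class_def by blast
  define \<rho> where "\<rho> = norm z"
  define G where "G = M * (1 / (1 - \<rho>)^2 - 1)"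
  define H where "H = M * (2 / (1 - \<rho>)^3)"
  have \<rho>: "0 \<le> \<rho>" "\<rho> < 1" using z unfolding \<rho>_def by auto
  have D1: "deriv f z = (\<Sum>n. diffs a n * z ^ n)" and D2: "deriv (deriv f) z = (\<Sum>n. diffs (diffs a) n * z ^ n)"
    using derivs_class[OF a(3) a(4) z] by auto
  have b1: "norm (deriv f z - 1) \<le> G" and b2: "norm (deriv (deriv f) z) \<le> H"
    using bounds_class[OF a(3) a(2) z] unfolding D1 D2 G_def H_def \<rho>_def by auto
  have Gp: "1 - G > 0" unfolding G_def using alg_pos[OF M al \<rho>] ph unfolding \<rho>_def by simp
  have "norm (1::complex) - norm (deriv f z) \<le> norm (1 - deriv f z)" by (rule norm_triangle_ineq2)
  then have n1: "norm (deriv f z) \<ge> 1 - G" using b1 by (simp add: norm_minus_commute)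
  then show nz: "deriv f z \<noteq> 0" using Gp by auto
  have key: "(1 - \<alpha>) * (1 - G) - \<rho> * H = phi M \<alpha> \<rho> / (1 - \<rho>)^3"
    unfolding G_def H_def using alg_key \<rho> by blast
  have c3: "(1 - \<rho>)^3 > 0" using \<rho> by simp
  have eqn: "norm (z * deriv (deriv f) z / deriv f z) = \<rho> * norm (deriv (deriv f) z) / norm (deriv f z)"
    unfolding \<rho>_def by (simp add: norm_mult norm_divide)
  have p1: "\<rho> * norm (deriv (deriv f) z) \<le> \<rho> * H" using b2 \<rho> by (simp add: mult_left_mono)
  have p2: "(1 - \<alpha>) * (1 - G) \<le> (1 - \<alpha>) * norm (deriv f z)" using n1 al by (simp add: mult_left_mono)
  have ndp: "norm (deriv f z) > 0" using nz by simp
  have "phi M \<alpha> \<rho> / (1 - \<rho>)^3 \<ge> 0" using ph c3 unfolding \<rho>_def by simp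
  then have "\<rho> * H \<le> (1 - \<alpha>) * (1 - G)" using key by linarith
  then have "\<rho> * norm (deriv (deriv f) z) \<le> (1 - \<alpha>) * norm (deriv f z)" using p1 p2 by linarith
  then show "norm (z * deriv (deriv f) z / deriv f z) \<le> 1 - \<alpha>"
    unfolding eqn using ndp by (simp add: divide_le_eq)
  assume "phi M \<alpha> (norm z) > 0"
  then have "phi M \<alpha> \<rho> / (1 - \<rho>)^3 > 0" using c3 unfolding \<rho>_def by simp
  then have "\<rho> * H < (1 - \<alpha>) * (1 - G)" using key by linarith
  then have "\<rho> * norm (deriv (deriv f) z) < (1 - \<alpha>) * norm (deriv f z)" using p1 p2 by linarith
  then show "norm (z * deriv (deriv f) z / deriv f z) < 1 - \<alpha>"
    unfolding eqn using ndp by (simp add: divide_less_eq)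
qed

lemma sharp:
  assumes M: "M > 0" and al: "0 \<le> \<alpha>" "\<alpha> < 1" and r0: "0 \<le> r0" "r0 < 1"
    and ph: "phi M \<alpha> r0 = 0" and r: "r0 < r"
  shows "\<exists>z. norm z < r \<and> (deriv (\<lambda>z. \<Sum>n. ecoef M n * z ^ n) z = 0 \<or>
     (\<exists>t. z * deriv (deriv (\<lambda>z. \<Sum>n. ecoef M n * z ^ n)) z / deriv (\<lambda>z. \<Sum>n. ecoef M n * z ^ n) z
        = of_real t \<and> t < -(1 - \<alpha>)))"
proof -
  define E where "E = (\<lambda>z. \<Sum>n. ecoef M n * z ^ n)"
  have Ecl: "E \<in> bounded_coeff_class M" unfolding E_def using ecoef_class M by simp
  obtain a :: "nat \<Rightarrow> complex" where a: "a 0 = 0" "a 1 = 1" "\<forall>n\<ge>2. norm (a n) \<le> M"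
    "\<forall>z\<in>ball 0 1. E z = (\<Sum>n. a n * z ^ n)"
    using Ecl unfolding bounded_coeff_class_def by blast
  have ea: "\<forall>n\<ge>2. norm (ecoef M n) \<le> M" using M by (simp add: ecoef_def)
  have Eeq: "\<forall>z\<in>ball 0 1. E z = (\<Sum>n. ecoef M n * z ^ n)" unfolding E_def by simp
  define q where "q = sqrt (M / (1 + M))"
  have q: "0 < q" "q < 1" unfolding q_def using M by auto
  have "1 - M * (1 / (1 - r0)^2 - 1) > 0" using alg_pos[OF M al r0] ph by simp
  then have "M / (1 - r0)^2 < 1 + M" by (simp add: algebra_simps)
  then have "M < (1 + M) * (1 - r0)^2" using r0 by (simp add: divide_less_eq mult.commute)
  then have "M / (1 + M) < (1 - r0)^2" using M by (simp add: divide_less_eq mult.commute)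
  then have "q < sqrt ((1 - r0)^2)" unfolding q_def by (rule real_sqrt_less_mono)
  then have qr0: "q < 1 - r0" using r0 by simp
  define s where "s = min ((r0 + r) / 2) (1 - q)"
  have s: "r0 < s" "s < r" "s < 1" "0 \<le> s" using r qr0 q r0 unfolding s_def min_def by auto
  have "q \<le> 1 - s" unfolding s_def by simp
  then have "q^2 \<le> (1 - s)^2" using q by (intro power_mono) auto
  then have "M / (1 + M) \<le> (1 - s)^2" unfolding q_def using M by simp
  then have "M \<le> (1 + M) * (1 - s)^2" using M by (simp add: divide_le_eq mult.commute)
  then have "M / (1 - s)^2 \<le> 1 + M" using s by (simp add: divide_le_eq mult.commute)
  then have Gn: "1 - M * (1 / (1 - s)^2 - 1) \<ge> 0" by (simp add: algebra_simps)
  have phs: "phi M \<alpha> s < 0" using phi_mono[OF M al s(1)] s ph by simp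
  have zs: "norm (complex_of_real s) < 1" using s by simp
  have D1: "deriv E (of_real s) = of_real (1 - M * (1 / (1 - s)^2 - 1))"
    using derivs_class(1)[OF ea Eeq zs] ecoef_vals(1)[OF s(4) s(3)] by simp
  have D2: "deriv (deriv E) (of_real s) = of_real (- (M * (2 / (1 - s)^3)))"
    using derivs_class(2)[OF ea Eeq zs] ecoef_vals(2)[OF s(4) s(3)] by simp
  define G where "G = M * (1 / (1 - s)^2 - 1)"
  define H where "H = M * (2 / (1 - s)^3)"
  have nzs: "norm (complex_of_real s) < r" using s by simp
  have "\<exists>z. norm z < r \<and> (deriv E z = 0 \<or> (\<exists>t. z * deriv (deriv E) z / deriv E z = of_real t \<and> t < -(1 - \<alpha>)))"
  proof (cases "1 - G = 0")
    case True
    then have "deriv E (of_real s) = 0" using D1 unfolding G_def by simp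
    then show ?thesis using nzs by blast
  next
    case False
    then have Gp: "1 - G > 0" using Gn unfolding G_def by simp
    have key: "(1 - \<alpha>) * (1 - G) - s * H = phi M \<alpha> s / (1 - s)^3"
      unfolding G_def H_def using alg_key s by blast
    have "(1 - s)^3 > 0" using s by simp
    then have "phi M \<alpha> s / (1 - s)^3 < 0" using phs by (simp add: divide_neg_pos)
    then have lt: "(1 - \<alpha>) * (1 - G) < s * H" using key by linarith
    define t where "t = s * (- H) / (1 - G)"
    have teq: "complex_of_real s * deriv (deriv E) (of_real s) / deriv E (of_real s) = of_real t"
      unfolding D1 D2 t_def G_def H_def by simp
    have "(1 - \<alpha>) < s * H / (1 - G)" using Gp lt by (simp add: less_divide_eq)
    then have "t < -(1 - \<alpha>)" unfolding t_def by simp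
    then show ?thesis using teq nzs by blast
  qed
  then show ?thesis unfolding E_def .
qed

lemma gen_le:
  assumes M: "M > 0" and al: "0 \<le> \<alpha>" "\<alpha> < 1" and r0: "0 < r0" "r0 < 1"
    and ph: "phi M \<alpha> r0 = 0" and f: "f \<in> bounded_coeff_class M" and z: "norm z \<le> r0"
  shows "deriv f z \<noteq> 0 \<and> norm (z * deriv (deriv f) z / deriv f z) \<le> 1 - \<alpha>"
proof -
  have "phi M \<alpha> (norm z) \<ge> 0"
  proof (cases "norm z = r0")
    case True then show ?thesis using ph by simp
  next
    case False then have "norm z < r0" using z by simp
    then show ?thesis using phi_mono[OF M al, of "norm z" r0] r0 ph by simp
  qed
  then show ?thesis using main_bound[OF M al f, of z] z r0 by simp
qed

lemma gen_lt:
  assumes M: "M > 0" and al: "0 \<le> \<alpha>" "\<alpha> < 1" and r0: "0 < r0" "r0 < 1"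
    and ph: "phi M \<alpha> r0 = 0" and f: "f \<in> bounded_coeff_class M" and z: "norm z < r0"
  shows "deriv f z \<noteq> 0 \<and> norm (z * deriv (deriv f) z / deriv f z) < 1 - \<alpha>"
proof -
  have "phi M \<alpha> (norm z) > 0" using phi_mono[OF M al, of "norm z" r0] r0 ph z by simp
  then show ?thesis using main_bound[OF M al f, of z] z r0 by simp
qed

lemma Re_ge: "Re (1 + w) \<ge> 1 - norm w"
  using abs_Re_le_cmod[of w] by simp

lemma gen_radius:
  assumes M: "M > 0" and al: "0 \<le> \<alpha>" "\<alpha> < 1" and r0: "0 < r0" "r0 < 1"
    and ph: "phi M \<alpha> r0 = 0"
  shows "(\<forall>r. r0 < r \<and> r \<le> 1 \<longrightarrow> (\<exists>f\<in>bounded_coeff_class M. \<exists>z. norm z < r \<and>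
            (deriv f z = 0 \<or> norm (z * deriv (deriv f) z / deriv f z) > 1 - \<alpha>)))"
    "radius_convexity_order (bounded_coeff_class M) \<alpha> = r0"
proof -
  define E where "E = (\<lambda>z. \<Sum>n. ecoef M n * z ^ n)"
  have Ecl: "E \<in> bounded_coeff_class M" unfolding E_def using ecoef_class M by simp
  have sh: "\<exists>z. norm z < r \<and> (deriv E z = 0 \<or> (\<exists>t. z * deriv (deriv E) z / deriv E z = of_real t \<and> t < -(1 - \<alpha>)))"
    if "r0 < r" for r
    using sharp[OF M al _ _ ph that] r0 unfolding E_def by simp
  show "\<forall>r. r0 < r \<and> r \<le> 1 \<longrightarrow> (\<exists>f\<in>bounded_coeff_class M. \<exists>z. norm z < r \<and>
            (deriv f z = 0 \<or> norm (z * deriv (deriv f) z / deriv f z) > 1 - \<alpha>))"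
  proof (intro allI impI)
    fix r assume "r0 < r \<and> r \<le> 1"
    then obtain z where z: "norm z < r" and
      c: "deriv E z = 0 \<or> (\<exists>t. z * deriv (deriv E) z / deriv E z = of_real t \<and> t < -(1 - \<alpha>))"
      using sh by blast
    have "deriv E z = 0 \<or> norm (z * deriv (deriv E) z / deriv E z) > 1 - \<alpha>"
      using c al by auto
    then show "\<exists>f\<in>bounded_coeff_class M. \<exists>z. norm z < r \<and>
            (deriv f z = 0 \<or> norm (z * deriv (deriv f) z / deriv f z) > 1 - \<alpha>)"
      using Ecl z by blast
  qed
  show "radius_convexity_order (bounded_coeff_class M) \<alpha> = r0"
    unfolding radius_convexity_order_def
  proof (rule cSup_eq_maximum)
    show "r0 \<in> {r \<in> {0<..1}. \<forall>f\<in>bounded_coeff_class M. \<forall>z. norm z < r \<longrightarrow>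
      deriv f z \<noteq> 0 \<and> Re (1 + z * deriv (deriv f) z / deriv f z) > \<alpha>}"
    proof (intro CollectI conjI ballI allI impI)
      show "r0 \<in> {0<..1}" using r0 by simp
      fix f and z :: complex assume f: "f \<in> bounded_coeff_class M" and z: "norm z < r0"
      from gen_lt[OF M al r0 ph f z] show "deriv f z \<noteq> 0" by simp
      from gen_lt[OF M al r0 ph f z] Re_ge[of "z * deriv (deriv f) z / deriv f z"]
      show "Re (1 + z * deriv (deriv f) z / deriv f z) > \<alpha>" by linarith
    qed
  next
    fix x assume "x \<in> {r \<in> {0<..1}. \<forall>f\<in>bounded_coeff_class M. \<forall>z. norm z < r \<longrightarrow>
      deriv f z \<noteq> 0 \<and> Re (1 + z * deriv (deriv f) z / deriv f z) > \<alpha>}"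
    then have x: "\<And>z. norm z < x \<Longrightarrow> deriv E z \<noteq> 0 \<and> Re (1 + z * deriv (deriv E) z / deriv E z) > \<alpha>"
      using Ecl by blast
    show "x \<le> r0"
    proof (rule ccontr)
      assume "\<not> x \<le> r0"
      then obtain z where z: "norm z < x" and
        c: "deriv E z = 0 \<or> (\<exists>t. z * deriv (deriv E) z / deriv E z = of_real t \<and> t < -(1 - \<alpha>))"
        using sh[of x] by force
      from x[OF z] c obtain t where "z * deriv (deriv E) z / deriv E z = of_real t" "t < -(1 - \<alpha>)"
        "Re (1 + z * deriv (deriv E) z / deriv E z) > \<alpha>" by blast
      then show False by simp
    qed
  qed
qed

lemma unif_radius:
  assumes M: "M > 0" and r1: "0 < r1" "r1 < 1" and ph: "phi M (1/2) r1 = 0"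
  shows "radius_uniform_convexity (bounded_coeff_class M) = r1"
proof -
  have al: "0 \<le> (1/2::real)" "(1/2::real) < 1" by auto
  define E where "E = (\<lambda>z. \<Sum>n. ecoef M n * z ^ n)"
  have Ecl: "E \<in> bounded_coeff_class M" unfolding E_def using ecoef_class M by simp
  have sh: "\<exists>z. norm z < r \<and> (deriv E z = 0 \<or> (\<exists>t. z * deriv (deriv E) z / deriv E z = of_real t \<and> t < -(1 - 1/2)))"
    if "r1 < r" for r
    using sharp[OF M al _ _ ph that] r1 unfolding E_def by simp
  show ?thesis
    unfolding radius_uniform_convexity_def
  proof (rule cSup_eq_maximum)
    show "r1 \<in> {r \<in> {0<..1}. \<forall>f\<in>bounded_coeff_class M. \<forall>z. norm z < r \<longrightarrow>
      deriv f z \<noteq> 0 \<and>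
      Re (1 + z * deriv (deriv f) z / deriv f z) > norm (z * deriv (deriv f) z / deriv f z)}"
    proof (intro CollectI conjI ballI allI impI)
      show "r1 \<in> {0<..1}" using r1 by simp
      fix f and z :: complex assume f: "f \<in> bounded_coeff_class M" and z: "norm z < r1"
      from gen_lt[OF M al r1 ph f z] show "deriv f z \<noteq> 0" by simp
      from gen_lt[OF M al r1 ph f z] Re_ge[of "z * deriv (deriv f) z / deriv f z"]
      show "Re (1 + z * deriv (deriv f) z / deriv f z) > norm (z * deriv (deriv f) z / deriv f z)" by linarith
    qed
  next
    fix x assume "x \<in> {r \<in> {0<..1}. \<forall>f\<in>bounded_coeff_class M. \<forall>z. norm z < r \<longrightarrow>
      deriv f z \<noteq> 0 \<and>
      Re (1 + z * deriv (deriv f) z / deriv f z) > norm (z * deriv (deriv f) z / deriv f z)}"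
    then have x: "\<And>z. norm z < x \<Longrightarrow> deriv E z \<noteq> 0 \<and>
      Re (1 + z * deriv (deriv E) z / deriv E z) > norm (z * deriv (deriv E) z / deriv E z)"
      using Ecl by blast
    show "x \<le> r1"
    proof (rule ccontr)
      assume "\<not> x \<le> r1"
      then obtain z where z: "norm z < x" and
        c: "deriv E z = 0 \<or> (\<exists>t. z * deriv (deriv E) z / deriv E z = of_real t \<and> t < -(1 - 1/2))"
        using sh[of x] by force
      from x[OF z] c obtain t where "z * deriv (deriv E) z / deriv E z = of_real t" "t < -(1 - 1/2)"
        "Re (1 + z * deriv (deriv E) z / deriv E z) > norm (z * deriv (deriv E) z / deriv E z)" by blast
      then show False by simp
    qed
  qed
qed

theorem corollary3p7:
  fixes M \<alpha> r0 r1 :: real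
  assumes "M > 0" and "0 \<le> \<alpha>" and "\<alpha> < 1"
    and "0 < r0" and "r0 < 1"
    and "(1 - \<alpha>) * (1 + M) * (1 - r0) ^ 3 = M * (1 - \<alpha> + (1 + \<alpha>) * r0)"
    and "0 < r1" and "r1 < 1"
    and "(1 - 1/2) * (1 + M) * (1 - r1) ^ 3 = M * (1 - 1/2 + (1 + 1/2) * r1)"
  shows "(\<forall>f\<in>bounded_coeff_class M. \<forall>z. norm z \<le> r0 \<longrightarrow>
            deriv f z \<noteq> 0 \<and> norm (z * deriv (deriv f) z / deriv f z) \<le> 1 - \<alpha>)
       \<and> (\<forall>r. r0 < r \<and> r \<le> 1 \<longrightarrow> (\<exists>f\<in>bounded_coeff_class M. \<exists>z. norm z < r \<and>
            (deriv f z = 0 \<or> norm (z * deriv (deriv f) z / deriv f z) > 1 - \<alpha>)))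
       \<and> radius_convexity_order (bounded_coeff_class M) \<alpha> = r0
       \<and> radius_uniform_convexity (bounded_coeff_class M) = r1"
proof -
  have ph0: "phi M \<alpha> r0 = 0" unfolding phi_def using assms(6) by simp
  have ph1: "phi M (1/2) r1 = 0" unfolding phi_def using assms(9) by simp
  show ?thesis
    using gen_le[OF assms(1-5) ph0] gen_radius[OF assms(1-5) ph0] unif_radius[OF assms(1,7,8) ph1]
    by blast
qed

end
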